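(* Let $\lambda$ be a nonzero real number and $n$ a positive integer. Then, for real $x$, $$(1+x)F_{n,\lambda}(x)=\sum_{k=1}^{n+1}S_{2,\lambda}(n+1,k)(k-1)!\,x^{k}+n\lambda\sum_{k=1}^{n}S_{2,\lambda}(n,k)(k-1)!\,x^{k}.$$ Moreover, $$\int_{0}^{x}\frac{F_{n+1,\lambda}(t)}{t}\,dt+n\lambda\int_{0}^{x}\frac{F_{n,\lambda}(t)}{t}\,dt=(1+x)F_{n,\lambda}(x).$$
   Context: For real $y$ and integer $k\ge0$: $(y)_{0,\lambda}=1$, $(y)_{k,\lambda}=y(y-\lambda)\cdots(y-(k-1)\lambda)$; $(y)_0=1$, $(y)_k=y(y-1)\cdots(y-k+1)$. The degenerate exponential is $e_\lambda(t)=\sum_{k\ge0}(1)_{k,\lambda}t^k/k!=(1+\lambda t)^{1/\lambda}$. The degenerate Stirling numbers of the second kind are defined by $(x)_{n,\lambda}=\sum_{k=0}^{n}S_{2,\lambda}(n,k)(x)_{k}$ ($n\ge0$). The degenerate Fubini polynomials are defined by $\frac{1}{1-x(e_\lambda(t)-1)}=\sum_{n\ge0}F_{n,\lambda}(x)\frac{t^n}{n!}$; equivalently $F_{n,\lambda}(x)=\sum_{k=0}^{n}S_{2,\lambda}(n,k)k!\,x^k$. *)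

theory Defs
  imports "HOL-Analysis.Analysis"
begin

definition deg_ff :: "real \<Rightarrow> nat \<Rightarrow> real \<Rightarrow> real" where
  "deg_ff y k lam = (\<Prod>i<k. y - real i * lam)"

definition ff :: "real \<Rightarrow> nat \<Rightarrow> real" where
  "ff y k = (\<Prod>i<k. y - real i)"

definition S2_deg :: "real \<Rightarrow> nat \<Rightarrow> nat \<Rightarrow> real" where
  "S2_deg lam n = (THE c. (\<forall>k>n. c k = 0) \<and>
      (\<forall>x::real. deg_ff x n lam = (\<Sum>k\<le>n. c k * ff x k)))"

definition fubini_deg :: "real \<Rightarrow> nat \<Rightarrow> real \<Rightarrow> real" where
  "fubini_deg lam n x = (\<Sum>k\<le>n. S2_deg lam n k * fact k * x ^ k)"

end

theory Submission
  imports Defs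
begin

fun Sd :: "real \<Rightarrow> nat \<Rightarrow> nat \<Rightarrow> real" where
  "Sd lam 0 k = (if k = 0 then 1 else 0)"
| "Sd lam (Suc n) k = (if k = 0 then 0 else Sd lam n (k-1)) + (real k - real n * lam) * Sd lam n k"

lemma Sd_zero: "k > n \<Longrightarrow> Sd lam n k = 0"
  by (induction n arbitrary: k) auto

lemma Sd_Suc0: "Sd lam (Suc n) 0 = 0"
  by (induction n) auto

lemma Sd_0: "n \<ge> 1 \<Longrightarrow> Sd lam n 0 = 0"
  using Sd_Suc0 by (cases n) auto

lemma ff_Suc: "ff x (Suc k) = ff x k * (x - real k)"
  by (simp add: ff_def)

lemma Sd_prop: "deg_ff x n lam = (\<Sum>k\<le>n. Sd lam n k * ff x k)"
proof (induction n)
  case 0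
  then show ?case by (simp add: deg_ff_def ff_def)
next
  case (Suc n)
  have "deg_ff x (Suc n) lam = deg_ff x n lam * (x - real n * lam)"
    by (simp add: deg_ff_def)
  also have "\<dots> = (\<Sum>k\<le>n. Sd lam n k * ff x k * (x - real n * lam))"
    by (simp add: Suc sum_distrib_right)
  also have "\<dots> = (\<Sum>k\<le>n. Sd lam n k * ff x (Suc k)) + (\<Sum>k\<le>n. (real k - real n * lam) * Sd lam n k * ff x k)"
    by (simp add: ff_Suc sum.distrib[symmetric] algebra_simps)
  also have "(\<Sum>k\<le>n. Sd lam n k * ff x (Suc k)) = (\<Sum>k\<le>Suc n. (if k = 0 then 0 else Sd lam n (k-1)) * ff x k)"
    by (simp only: sum.atMost_Suc_shift) simp
  also have "(\<Sum>k\<le>n. (real k - real n * lam) * Sd lam n k * ff x k) = (\<Sum>k\<le>Suc n. (real k - real n * lam) * Sd lam n k * ff x k)"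
    by (simp add: Sd_zero)
  finally show ?case
    by (simp add: sum.distrib[symmetric] algebra_simps)
qed

lemma ff_nat_zero: "k > j \<Longrightarrow> ff (real j) k = 0"
  unfolding ff_def by (rule prod_zero) auto

lemma ff_nat_diag: "ff (real j) j \<noteq> 0"
  unfolding ff_def by (auto simp: prod_zero_iff)

lemma uniq:
  assumes c0: "\<forall>k>n. c k = 0" and d0: "\<forall>k>n. d k = 0"
    and eq: "\<forall>x::real. (\<Sum>k\<le>n. c k * ff x k) = (\<Sum>k\<le>n. d k * ff x k)"
  shows "c j = d j"
proof (induction j rule: less_induct)
  case (less j)
  show ?case
  proof (cases "j \<le> n")
    case False then show ?thesis using c0 d0 by auto
  next
    case True
    have "(\<Sum>k\<le>n. (c k - d k) * ff (real j) k) = 0"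
      using eq by (simp add: left_diff_distrib sum_subtractf)
    also have "(\<Sum>k\<le>n. (c k - d k) * ff (real j) k) = (\<Sum>k\<in>{j}. (c k - d k) * ff (real j) k)"
    proof (rule sum.mono_neutral_right)
      show "\<forall>i\<in>{..n} - {j}. (c i - d i) * ff (real j) i = 0"
      proof
        fix i assume "i \<in> {..n} - {j}"
        then have "i < j \<or> i > j" by auto
        then show "(c i - d i) * ff (real j) i = 0"
          using less ff_nat_zero by auto
      qed
    qed (use True in auto)
    finally show ?thesis using ff_nat_diag[of j] by simp
  qed
qed

lemma S2_eq: "S2_deg lam n = Sd lam n"
  unfolding S2_deg_def
proof (rule the_equality)
  show "(\<forall>k>n. Sd lam n k = 0) \<and> (\<forall>x. deg_ff x n lam = (\<Sum>k\<le>n. Sd lam n k * ff x k))"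
    using Sd_zero Sd_prop by auto
next
  fix c assume h: "(\<forall>k>n. c k = 0) \<and> (\<forall>x::real. deg_ff x n lam = (\<Sum>k\<le>n. c k * ff x k))"
  show "c = Sd lam n"
  proof
    fix j show "c j = Sd lam n j"
      by (rule uniq[of n]) (use h Sd_zero Sd_prop in auto)
  qed
qed

definition G :: "real \<Rightarrow> nat \<Rightarrow> real \<Rightarrow> real" where
  "G lam n x = (\<Sum>k=1..n. Sd lam n k * fact (k - 1) * x ^ k)"

lemma fub: "fubini_deg lam n x = (\<Sum>k\<le>n. Sd lam n k * fact k * x ^ k)"
  by (simp add: fubini_deg_def S2_eq)

lemma part1:
  assumes "n \<ge> 1"
  shows "G lam (Suc n) x = (1 + x) * fubini_deg lam n x - real n * lam * G lam n x"
proof -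
  have "G lam (Suc n) x = (\<Sum>k=1..Suc n. Sd lam n (k-1) * fact (k - 1) * x ^ k)
     + (\<Sum>k=1..Suc n. (real k - real n * lam) * Sd lam n k * fact (k - 1) * x ^ k)"
    by (simp add: G_def sum.distrib[symmetric] algebra_simps)
  also have "(\<Sum>k=1..Suc n. Sd lam n (k-1) * fact (k - 1) * x ^ k) = x * fubini_deg lam n x"
  proof -
    have "(\<Sum>k=1..Suc n. Sd lam n (k-1) * fact (k - 1) * x ^ k) = (\<Sum>k=0..n. Sd lam n k * fact k * x ^ Suc k)"
      using sum.shift_bounds_cl_Suc_ivl[of "\<lambda>k. Sd lam n (k-1) * fact (k-1) * x^k" 0 n] by simp
    also have "\<dots> = x * fubini_deg lam n x"
      by (simp add: fub sum_distrib_left atLeast0AtMost algebra_simps)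
    finally show ?thesis .
  qed
  also have "(\<Sum>k=1..Suc n. (real k - real n * lam) * Sd lam n k * fact (k - 1) * x ^ k)
      = (\<Sum>k=1..n. Sd lam n k * fact k * x ^ k) - real n * lam * G lam n x"
  proof -
    have "(\<Sum>k=1..Suc n. (real k - real n * lam) * Sd lam n k * fact (k - 1) * x ^ k)
        = (\<Sum>k=1..n. (real k - real n * lam) * Sd lam n k * fact (k - 1) * x ^ k)"
      using Sd_zero[of n "Suc n" lam] by (simp only: sum.cl_ivl_Suc) simp
    also have "\<dots> = (\<Sum>k=1..n. Sd lam n k * fact k * x ^ k - real n * lam * (Sd lam n k * fact (k - 1) * x ^ k))"
    proof (rule sum.cong)
      fix k assume "k \<in> {1..n}"
      then have "fact k = real k * (fact (k - 1) :: real)"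
        by (intro fact_reduce) auto
      then show "(real k - real n * lam) * Sd lam n k * fact (k - 1) * x ^ k =
          Sd lam n k * fact k * x ^ k - real n * lam * (Sd lam n k * fact (k - 1) * x ^ k)"
        by (simp add: algebra_simps)
    qed simp
    finally show ?thesis by (simp add: G_def sum_subtractf sum_distrib_left)
  qed
  also have "(\<Sum>k=1..n. Sd lam n k * fact k * x ^ k) = fubini_deg lam n x"
  proof -
    have "fubini_deg lam n x = (\<Sum>k=0..n. Sd lam n k * fact k * x ^ k)"
      by (simp add: fub atLeast0AtMost)
    also have "\<dots> = (\<Sum>k=Suc 0..n. Sd lam n k * fact k * x ^ k)"
      by (subst sum.atLeast_Suc_atMost) (use assms Sd_0 in auto)
    finally show ?thesis by simp
  qed
  finally show ?thesis by (simp add: algebra_simps)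
qed

lemma part2:
  assumes "m \<ge> 1"
  shows "(LBINT t=ereal 0..ereal x. fubini_deg lam m t / t) = G lam m x"
proof -
  define g where "g t = (\<Sum>k=1..m. Sd lam m k * fact k * t ^ (k - 1))" for t :: real
  have fe: "fubini_deg lam m t = t * g t" for t
  proof -
    have "fubini_deg lam m t = (\<Sum>k=0..m. Sd lam m k * fact k * t ^ k)"
      by (simp add: fub atLeast0AtMost)
    also have "\<dots> = (\<Sum>k=Suc 0..m. Sd lam m k * fact k * t ^ k)"
      by (subst sum.atLeast_Suc_atMost) (use assms Sd_0 in auto)
    also have "\<dots> = t * g t"
      unfolding g_def sum_distrib_left
      by (rule sum.cong) (auto simp: power_eq_if)
    finally show ?thesis .
  qed
  have "(LBINT t=ereal 0..ereal x. fubini_deg lam m t / t) = (LBINT t=ereal 0..ereal x. g t)"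
  proof (rule interval_integral_cong)
    fix t assume "t \<in> einterval (min (ereal 0) (ereal x)) (max (ereal 0) (ereal x))"
    then have "t \<noteq> 0" by (auto simp: einterval_def min_def max_def split: if_splits)
    then show "fubini_deg lam m t / t = g t" by (simp add: fe)
  qed
  also have "\<dots> = G lam m x - G lam m 0"
  proof (rule interval_integral_FTC_finite)
    show "continuous_on {min 0 x..max 0 x} g" unfolding g_def by (intro continuous_intros)
  next
    fix t :: real
    have d: "((\<lambda>t. G lam m t) has_real_derivative (\<Sum>k=1..m. Sd lam m k * fact (k - 1) * (real k * t ^ (k - 1)))) (at t)"
      unfolding G_def by (auto intro!: derivative_eq_intros sum.cong simp: mult_ac)
    have e: "(\<Sum>k=1..m. Sd lam m k * fact (k - 1) * (real k * t ^ (k - 1))) = g t"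
      unfolding g_def
    proof (rule sum.cong)
      fix k assume "k \<in> {1..m}"
      then have "fact k = real k * (fact (k - 1) :: real)"
        by (intro fact_reduce) auto
      then show "Sd lam m k * fact (k - 1) * (real k * t ^ (k - 1)) = Sd lam m k * fact k * t ^ (k - 1)"
        by simp
    qed simp
    have "((\<lambda>t. G lam m t) has_real_derivative g t) (at t)" using d e by simp
    then show "((\<lambda>t. G lam m t) has_vector_derivative g t) (at t within {min 0 x..max 0 x})"
      by (simp add: has_real_derivative_iff_has_vector_derivative has_vector_derivative_at_within)
  qed
  also have "G lam m 0 = 0" by (simp add: G_def)
  finally show ?thesis by simp
qed

theorem theorem13:
  fixes lam x :: real and n :: nat
  assumes "lam \<noteq> 0" and "n \<ge> 1"
  shows "(1 + x) * fubini_deg lam n x =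
           (\<Sum>k=1..n+1. S2_deg lam (n+1) k * fact (k - 1) * x ^ k)
           + real n * lam * (\<Sum>k=1..n. S2_deg lam n k * fact (k - 1) * x ^ k)
         \<and> (LBINT t=ereal 0..ereal x. fubini_deg lam (n+1) t / t)
           + real n * lam * (LBINT t=ereal 0..ereal x. fubini_deg lam n t / t)
         = (1 + x) * fubini_deg lam n x"
proof -
  have sums: "(\<Sum>k=1..n+1. S2_deg lam (n+1) k * fact (k - 1) * x ^ k) = G lam (Suc n) x"
    "(\<Sum>k=1..n. S2_deg lam n k * fact (k - 1) * x ^ k) = G lam n x"
    by (simp_all add: G_def S2_eq)
  have p1: "(1 + x) * fubini_deg lam n x = G lam (Suc n) x + real n * lam * G lam n x"
    using part1[OF assms(2), of lam x] by simp
  have i2: "(LBINT t=ereal 0..ereal x. fubini_deg lam (n+1) t / t) = G lam (Suc n) x"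
    by (simp add: part2)
  show ?thesis
    unfolding sums p1 part2[OF assms(2), where lam=lam and x=x] i2 by simp
qed

end
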